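(* There exists $\gamma_0>0$ such that for every $\gamma\in(0,\gamma_0]$ there exists $n_0$ such that the following holds for every even integer $n\ge n_0$. Suppose $G$ is a graph on $n$ vertices with $\sigma(G)\ge n-\gamma n$. Then one of the following holds: (i) $G$ admits a perfect matching; (ii) $G$ contains a $2\gamma$-independent set of size at least $\frac n2$; (iii) $G$ has exactly two connected components $C_1$ and $C_2$, each of odd order, and moreover, if $|C_i|\le\frac{1-\gamma}{2}n$ for some $i\in\{1,2\}$, then $C_i$ is a clique.
   Context: All graphs are finite and simple. $\sigma(G):=\min\{d(x)+d(y): x\ne y,\ xy\notin E(G)\}$ ($+\infty$ if $G$ is complete). For an $n$-vertex graph $G$ and $\gamma>0$, a set $S\subseteq V(G)$ is $\gamma$-independent if $G[S]$ has at most $\gamma n^2$ edges. *)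

theory Defs
  imports "HOL-Analysis.Analysis"
begin

definition simple_graph :: "'a set \<Rightarrow> 'a set set \<Rightarrow> bool" where
  "simple_graph V E \<longleftrightarrow> finite V \<and> (\<forall>e\<in>E. \<exists>x y. e = {x, y} \<and> x \<in> V \<and> y \<in> V \<and> x \<noteq> y)"

definition degree :: "'a set \<Rightarrow> 'a set set \<Rightarrow> 'a \<Rightarrow> nat" where
  "degree V E x = card {y \<in> V. {x, y} \<in> E}"

text \<open>sigma(G) = min of d(x)+d(y) over distinct non-adjacent pairs; +infinity if complete.\<close>
definition sigma :: "'a set \<Rightarrow> 'a set set \<Rightarrow> ereal" where
  "sigma V E = (INF p \<in> {(x, y). x \<in> V \<and> y \<in> V \<and> x \<noteq> y \<and> {x, y} \<notin> E}.
                   ereal (real (degree V E (fst p) + degree V E (snd p))))"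

definition perfect_matching :: "'a set \<Rightarrow> 'a set set \<Rightarrow> 'a set set \<Rightarrow> bool" where
  "perfect_matching V E M \<longleftrightarrow> M \<subseteq> E \<and> (\<forall>v\<in>V. \<exists>!e. e \<in> M \<and> v \<in> e)"

definition has_perfect_matching :: "'a set \<Rightarrow> 'a set set \<Rightarrow> bool" where
  "has_perfect_matching V E \<longleftrightarrow> (\<exists>M. perfect_matching V E M)"

definition gamma_independent :: "'a set \<Rightarrow> 'a set set \<Rightarrow> real \<Rightarrow> 'a set \<Rightarrow> bool" where
  "gamma_independent V E \<gamma> S \<longleftrightarrow> S \<subseteq> V \<and>
     real (card {e \<in> E. e \<subseteq> S}) \<le> \<gamma> * (real (card V))\<^sup>2"

definition reach :: "'a set \<Rightarrow> 'a set set \<Rightarrow> ('a \<times> 'a) set" where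
  "reach V E = ({(x, y). {x, y} \<in> E})\<^sup>* \<inter> (V \<times> V)"

definition components :: "'a set \<Rightarrow> 'a set set \<Rightarrow> 'a set set" where
  "components V E = V // reach V E"

definition clique :: "'a set set \<Rightarrow> 'a set \<Rightarrow> bool" where
  "clique E C \<longleftrightarrow> (\<forall>x\<in>C. \<forall>y\<in>C. x \<noteq> y \<longrightarrow> {x, y} \<in> E)"

end

theory Submission
  imports Defs
begin

definition pmf :: "'a set \<Rightarrow> 'a set set \<Rightarrow> ('a \<Rightarrow> 'a) \<Rightarrow> bool" where
  "pmf V E f \<longleftrightarrow> (\<forall>x\<in>V. f x \<in> V \<and> f x \<noteq> x \<and> f (f x) = x \<and> {x, f x} \<in> E)"

lemma pmf_imp_pm:
  assumes "pmf V E f" shows "has_perfect_matching V E"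
proof -
  let ?M = "(\<lambda>x. {x, f x}) ` V"
  have "perfect_matching V E ?M"
    unfolding perfect_matching_def
  proof (intro conjI ballI)
    show "?M \<subseteq> E" using assms unfolding pmf_def by auto
  next
    fix v assume v: "v \<in> V"
    show "\<exists>!e. e \<in> ?M \<and> v \<in> e"
    proof (rule ex1I[of _ "{v, f v}"])
      show "{v, f v} \<in> ?M \<and> v \<in> {v, f v}" using v by auto
    next
      fix e assume "e \<in> ?M \<and> v \<in> e"
      then obtain x where x: "x \<in> V" "e = {x, f x}" "v \<in> e" by auto
      then have "v = x \<or> v = f x" by auto
      then show "e = {v, f v}"
      proof
        assume "v = x" then show ?thesis using x by simp
      next
        assume "v = f x" then have "f v = x" using assms x unfolding pmf_def by auto
        then show ?thesis using x \<open>v = f x\<close> by auto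
      qed
    qed
  qed
  then show ?thesis unfolding has_perfect_matching_def by blast
qed

lemma pm_imp_pmf:
  assumes sg: "simple_graph V E" and pm: "has_perfect_matching V E"
  shows "\<exists>f. pmf V E f"
proof -
  obtain M where M: "perfect_matching V E M" using pm unfolding has_perfect_matching_def by blast
  have ME: "M \<subseteq> E" and uniq: "\<And>v. v \<in> V \<Longrightarrow> \<exists>!e. e \<in> M \<and> v \<in> e"
    using M unfolding perfect_matching_def by auto
  define ed where "ed v = (THE e. e \<in> M \<and> v \<in> e)" for v
  have ed: "ed v \<in> M \<and> v \<in> ed v" if "v \<in> V" for v
    using theI'[OF uniq[OF that]] unfolding ed_def by blast
  have ed_eq: "ed v = e" if "v \<in> V" "e \<in> M" "v \<in> e" for v e
    using uniq[OF that(1)] ed[OF that(1)] that by blast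
  have edE: "\<exists>w. w \<in> V \<and> w \<noteq> v \<and> ed v = {v, w}" if "v \<in> V" for v
  proof -
    have "ed v \<in> E" using ed[OF that] ME by blast
    then obtain x y where "ed v = {x, y}" "x \<in> V" "y \<in> V" "x \<noteq> y"
      using sg unfolding simple_graph_def by blast
    then show ?thesis using ed[OF that] by auto
  qed
  define f where "f v = (SOME w. w \<in> V \<and> w \<noteq> v \<and> ed v = {v, w})" for v
  have f: "f v \<in> V \<and> f v \<noteq> v \<and> ed v = {v, f v}" if "v \<in> V" for v
    using someI_ex[OF edE[OF that]] unfolding f_def by blast
  have "pmf V E f" unfolding pmf_def
  proof (intro ballI conjI)
    fix x assume x: "x \<in> V"
    show "f x \<in> V" "f x \<noteq> x" using f[OF x] by auto
    show "{x, f x} \<in> E" using f[OF x] ed[OF x] ME by auto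
    have "ed (f x) = ed x" using ed_eq[of "f x" "ed x"] f[OF x] ed[OF x] by auto
    then have "{f x, f (f x)} = {x, f x}" using f[of "f x"] f[OF x] by auto
    then show "f (f x) = x" using f[of "f x"] f[OF x] by (auto simp: doubleton_eq_iff)
  qed
  then show ?thesis by blast
qed


fun aseq :: "('a \<Rightarrow> 'a) \<Rightarrow> ('a \<Rightarrow> 'a) \<Rightarrow> 'a \<Rightarrow> nat \<Rightarrow> 'a" where
  "aseq f1 f2 b 0 = b"
| "aseq f1 f2 b (Suc i) = (if even i then f2 else f1) (aseq f1 f2 b i)"

locale twoinv =
  fixes V :: "'a set" and f1 f2 :: "'a \<Rightarrow> 'a" and b :: 'a
  assumes fin: "finite V"
    and i1: "\<And>x. x \<in> V \<Longrightarrow> f1 x \<in> V \<and> f1 x \<noteq> x \<and> f1 (f1 x) = x"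
    and i2: "\<And>x. x \<in> V \<Longrightarrow> f2 x \<in> V \<and> f2 x \<noteq> x \<and> f2 (f2 x) = x"
    and bV: "b \<in> V"
begin

abbreviation "p \<equiv> aseq f1 f2 b"
abbreviation "g (j::nat) \<equiv> (if even j then f2 else f1)"

lemma gV: "x \<in> V \<Longrightarrow> g j x \<in> V \<and> g j x \<noteq> x \<and> g j (g j x) = x"
  using i1 i2 by auto

lemma pV: "p i \<in> V"
  by (induction i) (auto simp: bV i1 i2)

declare aseq.simps(2)[simp del]

lemma pS: "p (Suc j) = g j (p j)" by (simp add: aseq.simps(2))

lemma pback: "p j = g j (p (Suc j))"
proof -
  have "p (Suc j) = g j (p j)" by (rule pS)
  then show ?thesis using gV[OF pV[of j], of j] by simp
qed

lemma no_mixed: "p j \<noteq> p (j + 2*m + 1)"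
proof (induction m arbitrary: j)
  case 0
  have "p (j + 2*0 + 1) = g j (p j)" using pS[of j] by simp
  then show ?case using gV[OF pV[of j], of j] by metis
next
  case (Suc m)
  show ?case
  proof
    assume h: "p j = p (j + 2 * Suc m + 1)"
    have e: "g (j + 2*m + 2) = g j" by simp
    have s1: "Suc (j + 2*m + 2) = j + 2 * Suc m + 1" by simp
    have "p (j + 2*m + 2) = g (j + 2*m + 2) (p (Suc (j + 2*m + 2)))"
      by (rule pback)
    also have "\<dots> = g j (p j)" unfolding e s1 h ..
    also have "\<dots> = p (Suc j)" by (rule pS[symmetric])
    finally have "p (Suc j + 2*m + 1) = p (Suc j)" by simp
    then show False using Suc.IH[of "Suc j"] by simp
  qed
qed

lemma same_back: "even k \<Longrightarrow> p j = p (j + k) \<Longrightarrow> p 0 = p k"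
proof (induction j)
  case 0 then show ?case by simp
next
  case (Suc j)
  have "p j = g j (p (Suc j))" by (rule pback)
  moreover have "p (j + k) = g (j + k) (p (Suc (j + k)))" by (rule pback)
  moreover have "g (j + k) = g j" using Suc.prems by simp
  ultimately have "p j = p (j + k)" using Suc.prems by simp
  then show ?case using Suc by simp
qed

lemma forward: "even k \<Longrightarrow> p 0 = p k \<Longrightarrow> p m = p (m + k)"
proof (induction m)
  case 0 then show ?case by simp
next
  case (Suc m)
  have "g (m + k) = g m" using Suc.prems by simp
  then have "p (Suc m) = g (m + k) (p (m + k))" using Suc pS[of m] by simp
  also have "\<dots> = p (Suc m + k)" using pS[of "m + k"] by simp
  finally show ?case .
qed

lemma forward_mult: "even k \<Longrightarrow> p 0 = p k \<Longrightarrow> p m = p (m + q * k)"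
proof (induction q)
  case 0 then show ?case by simp
next
  case (Suc q)
  have "p (m + q * k) = p (m + q * k + k)" using forward[OF Suc.prems] by blast
  then show ?case using Suc by (simp add: algebra_simps)
qed

lemma forward_mod: "even k \<Longrightarrow> p 0 = p k \<Longrightarrow> p m = p (m mod k)"
  using forward_mult[of k "m mod k" "m div k"] by simp

lemma period: "\<exists>N>0. even N \<and> p N = b"
proof -
  define h where "h j = p (2*j)" for j
  have "range h \<subseteq> V" using pV unfolding h_def by auto
  then have fr: "finite (range h)" using fin finite_subset by blast
  have "\<not> inj h"
  proof
    assume "inj h"
    then have "finite (UNIV::nat set)" using finite_imageD[OF fr] by blast
    then show False by simp
  qed
  then obtain i j where ij: "i \<noteq> j" "h i = h j" unfolding inj_def by blast
  have "\<exists>i j. i < j \<and> h i = h j"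
  proof (cases "i < j")
    case True then show ?thesis using ij by blast
  next
    case False then have "j < i" using ij by simp
    then show ?thesis using ij by metis
  qed
  then obtain i j where ij: "i < j" "p (2*i) = p (2*j)" unfolding h_def by blast
  have "2*j = 2*i + 2*(j-i)" using ij by simp
  then have "p 0 = p (2*(j-i))"
    using same_back[of "2*(j-i)" "2*i"] ij by simp
  then show ?thesis using ij by (intro exI[of _ "2*(j-i)"]) auto
qed

lemma closed: "x \<in> range p \<Longrightarrow> f1 x \<in> range p \<and> f2 x \<in> range p"
proof -
  assume "x \<in> range p"
  then obtain i where x: "x = p i" by blast
  obtain N where N: "N > 0" "even N" "p N = b" using period by blast
  have A: "f2 x \<in> range p"
  proof (cases "even i")
    case True
    then have "f2 x = p (Suc i)" using x pS[of i] by simp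
    then show ?thesis by blast
  next
    case False
    then obtain k where "i = Suc k" by (cases i) auto
    moreover have "even k" using False calculation by simp
    ultimately have "x = f2 (p k)" using x pS[of k] by simp
    then show ?thesis using i2[OF pV[of k]] by auto
  qed
  have B: "f1 x \<in> range p"
  proof (cases "even i")
    case False
    then have "f1 x = p (Suc i)" using x pS[of i] by simp
    then show ?thesis by blast
  next
    case True
    show ?thesis
    proof (cases i)
      case 0
      obtain k where k: "N = Suc k" using N(1) gr0_implies_Suc by blast
      then have "odd k" using N(2) by simp
      note k = k this
      then have "b = f1 (p k)" using N k pS[of k] by simp
      then show ?thesis using x 0 i1[OF pV[of k]] by auto
    next
      case (Suc k)
      then have "odd k" using True by simp
      then have "x = f1 (p k)" using x Suc pS[of k] by simp
      then show ?thesis using i1[OF pV[of k]] by auto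
    qed
  qed
  show ?thesis using A B by blast
qed

end


lemma swap:
  assumes fin: "finite V"
    and f1: "pmf V (insert {a, c} E) f1" and f2: "pmf V (insert {b, d} E) f2"
    and f1a: "f1 a = c" and f2b: "f2 b = d"
    and V: "a \<in> V" "b \<in> V" "c \<in> V" "d \<in> V"
    and ab: "{a, b} \<in> E" and bc: "{b, c} \<in> E" and nb: "b \<noteq> a" "b \<noteq> c"
  shows "\<exists>f. pmf V E f"
proof -
  interpret twoinv V f1 f2 b
    using fin f1 f2 V unfolding pmf_def by unfold_locales auto
  have f1c: "f1 c = a" using f1a i1[OF V(1)] by simp
  have f1ac: "f1 y \<in> {a, c} \<longleftrightarrow> y \<in> {a, c}" if "y \<in> V" for y
  proof -
    have fy: "f1 (f1 y) = y" using i1[OF that] by blast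
    show ?thesis
    proof
      assume "f1 y \<in> {a, c}"
      then have "f1 y = a \<or> f1 y = c" by blast
      then have "f1 (f1 y) = f1 a \<or> f1 (f1 y) = f1 c" by blast
      then show "y \<in> {a, c}" unfolding fy f1a f1c by blast
    next
      assume "y \<in> {a, c}"
      then have "y = a \<or> y = c" by blast
      then have "f1 y = f1 a \<or> f1 y = f1 c" by blast
      then show "f1 y \<in> {a, c}" unfolding f1a f1c by blast
    qed
  qed
  have e1: "{y, f1 y} \<in> E" if "y \<in> V" "y \<notin> {a, c}" for y
  proof -
    have "{y, f1 y} \<in> insert {a, c} E" using f1 that(1) unfolding pmf_def by blast
    moreover have "{y, f1 y} \<noteq> {a, c}" using that(2) by blast
    ultimately show ?thesis by blast
  qed
  have e2: "{y, f2 y} \<in> E" if "y \<in> V" "y \<noteq> b" "y \<noteq> d" for y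
  proof -
    have "{y, f2 y} \<in> insert {b, d} E" using f2 that(1) unfolding pmf_def by blast
    moreover have "{y, f2 y} \<noteq> {b, d}" using that(2,3) by blast
    ultimately show ?thesis by blast
  qed
  have d1: "p 1 = d" using pS[of 0] f2b by simp
  show ?thesis
  proof (cases "a \<in> range p")
    case False
    have nc: "c \<notin> range p"
    proof
      assume "c \<in> range p"
      then have "f1 c \<in> range p" using closed by blast
      then show False using f1c False by simp
    qed
    define f where "f x = (if x \<in> range p then f1 x else f2 x)" for x
    have "pmf V E f" unfolding pmf_def
    proof (intro ballI)
      fix y assume y: "y \<in> V"
      show "f y \<in> V \<and> f y \<noteq> y \<and> f (f y) = y \<and> {y, f y} \<in> E"
      proof (cases "y \<in> range p")
        case True
        then show ?thesis using closed[OF True] i1[OF y] e1[OF y] False nc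
          unfolding f_def by auto
      next
        case F: False
        have "f2 y \<notin> range p"
        proof
          assume "f2 y \<in> range p"
          then have "f2 (f2 y) \<in> range p" using closed by blast
          then show False using i2[OF y] F by simp
        qed
        moreover have "b \<in> range p" "d \<in> range p"
          using rangeI[of p 0] rangeI[of p 1] d1 by auto
        moreover have "y \<noteq> b" "y \<noteq> d" using F calculation(2,3) by auto
        ultimately show ?thesis using i2[OF y] e2[OF y] F unfolding f_def by auto
      qed
    qed
    then show ?thesis by blast
  next
    case True
    then have ex: "\<exists>i. p i \<in> {a, c}" by auto
    define i where "i = (LEAST i. p i \<in> {a, c})"
    have pi: "p i \<in> {a, c}" using LeastI_ex[OF ex] unfolding i_def .
    have before: "p j \<notin> {a, c}" if "j < i" for j
      using not_less_Least[of j "\<lambda>i. p i \<in> {a, c}"] that unfolding i_def by blast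
    have i0: "i \<noteq> 0"
    proof
      assume "i = 0"
      then have "p i = b" by simp
      then show False using pi nb by auto
    qed
    have iodd: "odd i"
    proof
      assume "even i"
      obtain k where k: "i = Suc k" using i0 by (cases i) auto
      then have "odd k" using \<open>even i\<close> by simp
      note k = k this
      then have "p i = f1 (p k)" using pS[of k] by simp
      then have "p k \<in> {a, c}" using pi f1ac[OF pV[of k]] by simp
      then show False using before[of k] k by simp
    qed
    obtain a0 where a0: "a = p a0" using True by blast
    have no_b: "p j \<noteq> b" if "0 < j" "j < i" for j
    proof
      assume pj: "p j = b"
      show False
      proof (cases "even j")
        case True
        have "p a0 = p (a0 mod j)" using forward_mod[OF True] pj by simp
        moreover have "a0 mod j < i" using that by (meson order.strict_trans mod_less_divisor)
        ultimately show False using before[of "a0 mod j"] a0 by simp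
      next
        case False
        then obtain m where "j = 2*m + 1" by (rule oddE)
        then have "j = 0 + 2*m + 1" by simp
        then show False using no_mixed[of 0 m] pj by simp
      qed
    qed
    define x where "x = p i"
    define W where "W = p ` {..i}"
    have xW: "x \<in> W" and bW: "b \<in> W" and dW: "d \<in> W"
    proof -
      show "x \<in> W" unfolding W_def x_def by auto
      have "p 0 \<in> p ` {..i}" by blast
      then show "b \<in> W" unfolding W_def by simp
      have "1 \<le> i" using i0 by simp
      then have "p 1 \<in> p ` {..i}" by blast
      then show "d \<in> W" unfolding W_def d1 .
    qed
    have xb: "x \<noteq> b" using pi nb x_def by auto
    have W1: "\<exists>j. 0 < j \<and> j < i \<and> y = p j" if yy: "y \<in> W" "y \<noteq> b" "y \<noteq> x" for y
    proof -
      obtain j where j: "j \<le> i" "y = p j" using yy(1) unfolding W_def by auto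
      have "j \<noteq> 0"
      proof
        assume "j = 0" then show False using j yy(2) by simp
      qed
      moreover have "j \<noteq> i" using j yy(3) x_def by auto
      ultimately show ?thesis using j by (intro exI[of _ j]) auto
    qed
    have W2: "\<exists>j'. 0 < j' \<and> j' < i \<and> f1 (p j) = p j'" if jj: "0 < j" "j < i" for j
    proof (cases "even j")
      case False
      have "j + 1 \<noteq> i" using iodd False by auto
      then have "j + 1 < i" using that by simp
      then show ?thesis using False pS[of j] by (intro exI[of _ "j+1"]) auto
    next
      case True
      obtain k where k: "j = Suc k" using jj by (cases j) auto
      then have "odd k" using True by simp
      note k = k this
      then have "f1 (p j) = p k" using i1[OF pV[of k]] pS[of k] by simp
      moreover have "0 < k" using k by (cases k) auto
      ultimately show ?thesis using k that by (intro exI[of _ k]) auto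
    qed
    have W3: "f2 y \<notin> W" if "y \<in> V" "y \<notin> W" for y
    proof
      assume "f2 y \<in> W"
      then obtain j where j: "j \<le> i" "f2 y = p j" unfolding W_def by auto
      have "y = f2 (p j)" using j i2[OF that(1)] by metis
      moreover have "f2 (p j) \<in> W"
      proof (cases "even j")
        case True
        then have "j \<noteq> i" using iodd by auto
        then have "Suc j \<le> i" using j by simp
        moreover have "f2 (p j) = p (Suc j)" using True pS[of j] by simp
        ultimately show ?thesis unfolding W_def by auto
      next
        case False
        then obtain k where k: "j = Suc k" by (cases j) auto
        then have "even k" using False by simp
        note k = k this
        then have "f2 (p j) = p k" using i2[OF pV[of k]] pS[of k] by simp
        then show ?thesis using k j unfolding W_def by auto
      qed
      ultimately show False using that by simp
    qed
    have bxE: "{b, x} \<in> E" using pi ab bc x_def by (auto simp: insert_commute)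
    define f where "f y = (if y = b then x else if y = x then b else if y \<in> W then f1 y else f2 y)" for y
    have "pmf V E f" unfolding pmf_def
    proof (intro ballI)
      fix y assume y: "y \<in> V"
      show "f y \<in> V \<and> f y \<noteq> y \<and> f (f y) = y \<and> {y, f y} \<in> E"
      proof (cases "y = b")
        case True
        then show ?thesis using xb bxE unfolding f_def x_def by (auto simp: pV)
      next
        case nb': False
        show ?thesis
        proof (cases "y = x")
          case True
          then show ?thesis using xb bxE nb' bV unfolding f_def by (auto simp: insert_commute)
        next
          case nx: False
          show ?thesis
          proof (cases "y \<in> W")
            case True
            obtain j where j: "0 < j" "j < i" "y = p j" using W1[OF True nb' nx] by blast
            obtain j' where j': "0 < j'" "j' < i" "f1 y = p j'" using W2[OF j(1,2)] j by blast
            have "f1 y \<noteq> b" using no_b[OF j'(1,2)] j' by simp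
            moreover have "f1 y \<noteq> x" using before[OF j'(2)] j' pi x_def by auto
            moreover have "f1 y \<in> W" using j' unfolding W_def by auto
            moreover have "y \<notin> {a, c}" using before[OF j(2)] j by simp
            ultimately show ?thesis using True nb' nx i1[OF y] e1[OF y] unfolding f_def by auto
          next
            case False
            have "f2 y \<notin> W" using W3[OF y False] .
            then have "f2 y \<noteq> b" "f2 y \<noteq> x" using bW xW by auto
            moreover have "y \<noteq> d" using False dW by auto
            ultimately show ?thesis using False nb' nx i2[OF y] e2[OF y] \<open>f2 y \<notin> W\<close>
              unfolding f_def by auto
          qed
        qed
      qed
    qed
    then show ?thesis by blast
  qed
qed


lemma pmf_extend:
  assumes g: "pmf (V - {x, y}) E g" and xy: "x \<noteq> y" "x \<in> V" "y \<in> V" and e: "{x, y} \<in> E"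
  shows "pmf V E (g(x := y, y := x))"
  unfolding pmf_def
proof (intro ballI)
  fix z assume z: "z \<in> V"
  show "(g(x := y, y := x)) z \<in> V \<and> (g(x := y, y := x)) z \<noteq> z \<and>
        (g(x := y, y := x)) ((g(x := y, y := x)) z) = z \<and> {z, (g(x := y, y := x)) z} \<in> E"
  proof (cases "z \<in> {x, y}")
    case True
    then show ?thesis using xy e by (auto simp: insert_commute)
  next
    case False
    then have zz: "z \<in> V - {x, y}" using z by blast
    have gz: "g z \<in> V - {x, y} \<and> g z \<noteq> z \<and> g (g z) = z \<and> {z, g z} \<in> E"
      using g zz unfolding pmf_def by blast
    then show ?thesis using False by auto
  qed
qed

lemma pmf_notuse:
  assumes f: "pmf V (insert {a, c} E) f" and aV: "a \<in> V" and fa: "f a \<noteq> c"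
  shows "pmf V E f"
  unfolding pmf_def
proof (intro ballI)
  fix y assume y: "y \<in> V"
  have h: "f y \<in> V \<and> f y \<noteq> y \<and> f (f y) = y \<and> {y, f y} \<in> insert {a, c} E"
    using f y unfolding pmf_def by blast
  have "{y, f y} \<noteq> {a, c}"
  proof
    assume "{y, f y} = {a, c}"
    then have "(y = a \<and> f y = c) \<or> (y = c \<and> f y = a)" by (auto simp: doubleton_eq_iff)
    then show False
    proof
      assume h2: "y = a \<and> f y = c"
      then have "f a = c" by (metis)
      then show False using fa by blast
    next
      assume "y = c \<and> f y = a"
      then have "f a = c" using h by auto
      then show False using fa by simp
    qed
  qed
  then show "f y \<in> V \<and> f y \<noteq> y \<and> f (f y) = y \<and> {y, f y} \<in> E" using h by blast
qed

lemma p3: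
  assumes "(x, y) \<in> R\<^sup>*" "y \<noteq> x" "(x, y) \<notin> R"
  shows "\<exists>b c. (x, b) \<in> R \<and> (b, c) \<in> R \<and> c \<noteq> x \<and> (x, c) \<notin> R"
  using assms
proof (induction rule: rtrancl_induct)
  case base then show ?case by simp
next
  case (step z y)
  show ?case
  proof (cases "z = x")
    case True then show ?thesis using step by simp
  next
    case False
    show ?thesis
    proof (cases "(x, z) \<in> R")
      case True then show ?thesis using step by blast
    next
      case False
      then show ?thesis using step \<open>z \<noteq> x\<close> by blast
    qed
  qed
qed


lemma two_elems:
  assumes "finite C" "card C \<ge> 2"
  shows "\<exists>x y. x \<in> C \<and> y \<in> C \<and> x \<noteq> y"
proof (rule ccontr)
  assume "\<not> ?thesis"
  then have "card C \<le> Suc 0" using card_le_Suc0_iff_eq[OF assms(1)] by blast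
  then show False using assms(2) by simp
qed

lemma repl_dj:
  assumes "C \<in> P" "\<forall>D\<in>P. \<forall>D'\<in>P. D \<noteq> D' \<longrightarrow> D \<inter> D' = {}"
  shows "\<forall>D\<in>insert (C - X) (P - {C}). \<forall>D'\<in>insert (C - X) (P - {C}). D \<noteq> D' \<longrightarrow> D \<inter> D' = {}"
proof (intro ballI impI)
  fix D D' assume D: "D \<in> insert (C - X) (P - {C})" and D': "D' \<in> insert (C - X) (P - {C})" and ne: "D \<noteq> D'"
  show "D \<inter> D' = {}"
  proof (cases "D = C - X")
    case True
    then have "D' \<in> P - {C}" using D' ne by blast
    then have "C \<inter> D' = {}" using assms by blast
    then show ?thesis using True by blast
  next
    case False
    then have D1: "D \<in> P - {C}" using D by blast
    show ?thesis
    proof (cases "D' = C - X")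
      case True
      have "D \<inter> C = {}" using assms D1 by blast
      then show ?thesis using True by blast
    next
      case False
      then have "D' \<in> P - {C}" using D' by blast
      then show ?thesis using assms D1 ne by blast
    qed
  qed
qed

lemma repl_cl:
  assumes "C \<in> P" "\<forall>C\<in>P. \<forall>x\<in>C. \<forall>y\<in>C. x \<noteq> y \<longrightarrow> {x, y} \<in> E"
  shows "\<forall>D\<in>insert (C - X) (P - {C}). \<forall>u\<in>D. \<forall>v\<in>D. u \<noteq> v \<longrightarrow> {u, v} \<in> E"
proof (intro ballI impI)
  fix D u v assume D: "D \<in> insert (C - X) (P - {C})" and uv: "u \<in> D" "v \<in> D" "u \<noteq> v"
  show "{u, v} \<in> E"
  proof (cases "D = C - X")
    case True then show ?thesis using assms uv by blast
  next
    case False then have "D \<in> P" using D by blast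
    then show ?thesis using assms uv by blast
  qed
qed

lemma blocks:
  assumes "finite V" "even (card V)" "S \<subseteq> V"
    and "\<forall>x\<in>S. \<forall>y\<in>V. x \<noteq> y \<longrightarrow> {x, y} \<in> E"
    and "\<forall>C\<in>P. \<forall>x\<in>C. \<forall>y\<in>C. x \<noteq> y \<longrightarrow> {x, y} \<in> E"
    and "\<Union>P = V - S" and "\<forall>C\<in>P. \<forall>D\<in>P. C \<noteq> D \<longrightarrow> C \<inter> D = {}"
    and "finite P"
    and "card {C\<in>P. odd (card C)} \<le> card S"
  shows "\<exists>f. pmf V E f"
  using assms
proof (induction "card V" arbitrary: V S P rule: less_induct)
  case less
  note fin = less.prems(1) and ev = less.prems(2) and SV = less.prems(3)
    and univ = less.prems(4) and cl = less.prems(5) and un = less.prems(6)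
    and dj = less.prems(7) and fP = less.prems(8) and oc = less.prems(9)
  have DVS: "\<And>D. D \<in> P \<Longrightarrow> D \<subseteq> V - S" using un by blast
  have step: "\<exists>f. pmf V E f"
    if xy: "x \<noteq> y" "x \<in> V" "y \<in> V" "{x, y} \<in> E"
      and S': "S' \<subseteq> V - {x, y}"
      and univ': "\<forall>u\<in>S'. \<forall>v\<in>V - {x, y}. u \<noteq> v \<longrightarrow> {u, v} \<in> E"
      and cl': "\<forall>C\<in>P'. \<forall>u\<in>C. \<forall>v\<in>C. u \<noteq> v \<longrightarrow> {u, v} \<in> E"
      and un': "\<Union>P' = (V - {x, y}) - S'"
      and dj': "\<forall>C\<in>P'. \<forall>D\<in>P'. C \<noteq> D \<longrightarrow> C \<inter> D = {}"
      and fP': "finite P'"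
      and oc': "card {C\<in>P'. odd (card C)} \<le> card S'"
    for x y S' P'
  proof -
    have cV: "card (V - {x, y}) = card V - 2" using xy fin by (simp add: card_Diff_subset)
    have "card {x, y} \<le> card V" using xy fin by (intro card_mono) auto
    then have "card V \<ge> 2" using xy by simp
    then have lt: "card (V - {x, y}) < card V" using cV by simp
    have ev': "even (card (V - {x, y}))" using cV ev \<open>card V \<ge> 2\<close> by simp
    obtain g where g: "pmf (V - {x, y}) E g"
      using less.hyps[OF lt _ ev' S' univ' cl' un' dj' fP' oc'] fin by blast
    show ?thesis using pmf_extend[OF g xy] by blast
  qed
  show ?case
  proof (cases "V = {}")
    case True
    then show ?thesis unfolding pmf_def by blast
  next
    case Vne: False
    show ?thesis
    proof (cases "\<exists>C\<in>P. odd (card C)")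
      case True
      then obtain C where C: "C \<in> P" "odd (card C)" by blast
      then have "card C \<noteq> 0" by presburger
      then obtain r where r: "r \<in> C" by fastforce
      have rV: "r \<in> V" "r \<notin> S" using r C DVS by blast+
      have "{C\<in>P. odd (card C)} \<noteq> {}" using C by blast
      moreover have "finite {C\<in>P. odd (card C)}" using fP by simp
      ultimately have "card {C\<in>P. odd (card C)} > 0" by (simp add: card_gt_0_iff)
      then have "card S > 0" using oc by linarith
      then obtain s where s: "s \<in> S" by fastforce
      have sV: "s \<in> V" using s SV by blast
      have rs: "r \<noteq> s" using rV s by blast
      define S' where "S' = S - {s}"
      define P' where "P' = insert (C - {r}) (P - {C})"
      have Cfin: "finite C" using C DVS fin finite_subset[of C V] by blast
      have evC: "even (card (C - {r}))" using C r Cfin by (simp add: card_Diff_singleton)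
      show ?thesis
      proof (rule step[of r s S' P'])
        show "r \<noteq> s" "r \<in> V" "s \<in> V" by (fact rs, fact rV(1), fact sV)
        show "{r, s} \<in> E" using univ s rV rs by (metis insert_commute)
        show "S' \<subseteq> V - {r, s}" using SV rV unfolding S'_def by blast
        show "\<forall>u\<in>S'. \<forall>v\<in>V - {r, s}. u \<noteq> v \<longrightarrow> {u, v} \<in> E" using univ unfolding S'_def by blast
        show "\<forall>D\<in>P'. \<forall>u\<in>D. \<forall>v\<in>D. u \<noteq> v \<longrightarrow> {u, v} \<in> E"
          unfolding P'_def by (rule repl_cl[OF C(1) cl])
        have rC: "\<forall>D\<in>P - {C}. r \<notin> D"
        proof
          fix D assume "D \<in> P - {C}"
          then have "D \<inter> C = {}" using dj C by blast
          then show "r \<notin> D" using r by blast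
        qed
        show "\<Union>P' = (V - {r, s}) - S'"
        proof
          show "\<Union>P' \<subseteq> (V - {r, s}) - S'"
          proof
            fix v assume "v \<in> \<Union>P'"
            then obtain D where D: "D \<in> P'" "v \<in> D" by blast
            show "v \<in> (V - {r, s}) - S'"
            proof (cases "D = C - {r}")
              case True
              have vC: "v \<in> C" "v \<noteq> r" using D(2) True by blast+
              have "v \<in> V - S" using DVS[OF C(1)] vC(1) by blast
              moreover have "v \<noteq> s" using s \<open>v \<in> V - S\<close> by blast
              ultimately show ?thesis using vC(2) unfolding S'_def by blast
            next
              case False
              then have D1: "D \<in> P - {C}" using D unfolding P'_def by blast
              have "v \<noteq> r" using rC D1 D(2) by blast
              have "v \<in> V - S" using DVS D1 D(2) by blast
              moreover have "v \<noteq> s" using s \<open>v \<in> V - S\<close> by blast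
              ultimately show ?thesis using \<open>v \<noteq> r\<close> unfolding S'_def by blast
            qed
          qed
          show "(V - {r, s}) - S' \<subseteq> \<Union>P'"
          proof
            fix v assume v: "v \<in> (V - {r, s}) - S'"
            then have "v \<in> V - S" unfolding S'_def by blast
            then have "v \<in> \<Union>P" using un by simp
            then obtain D where D: "D \<in> P" "v \<in> D" by blast
            show "v \<in> \<Union>P'"
            proof (cases "D = C")
              case True then show ?thesis using D v unfolding P'_def by blast
            next
              case False then show ?thesis using D unfolding P'_def by blast
            qed
          qed
        qed
        show "\<forall>D\<in>P'. \<forall>D'\<in>P'. D \<noteq> D' \<longrightarrow> D \<inter> D' = {}" unfolding P'_def by (rule repl_dj[OF C(1) dj])
        show "finite P'" using fP unfolding P'_def by simp
        have sub: "{D\<in>P'. odd (card D)} \<subseteq> {D\<in>P. odd (card D)} - {C}"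
        proof
          fix D assume "D \<in> {D\<in>P'. odd (card D)}"
          then have D: "D \<in> P'" "odd (card D)" by blast+
          then have "D \<noteq> C - {r}" using evC by metis
          then have "D \<in> P - {C}" using D(1) unfolding P'_def by blast
          then show "D \<in> {D\<in>P. odd (card D)} - {C}" using D(2) by blast
        qed
        have "card {D\<in>P'. odd (card D)} \<le> card ({D\<in>P. odd (card D)} - {C})"
          using card_mono[OF _ sub] fP by simp
        also have "\<dots> = card {D\<in>P. odd (card D)} - 1" using C fP by (simp add: card_Diff_singleton)
        also have "\<dots> \<le> card S - 1" using oc by simp
        also have "\<dots> = card S'" unfolding S'_def using s fin SV
          by (simp add: card_Diff_singleton finite_subset)
        finally show "card {D\<in>P'. odd (card D)} \<le> card S'" .
      qed
    next
      case noodd: False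
      show ?thesis
      proof (cases "\<exists>C\<in>P. card C \<ge> 2")
        case True
        then obtain C where C: "C \<in> P" "card C \<ge> 2" by blast
        have Cfin0: "finite C" using C DVS fin finite_subset[of C V] by blast
        obtain x y where xy: "x \<in> C" "y \<in> C" "x \<noteq> y"
          using two_elems[OF Cfin0 C(2)] by blast
        have xyV: "x \<in> V" "y \<in> V" "x \<notin> S" "y \<notin> S" using xy C DVS by blast+
        define P' where "P' = insert (C - {x, y}) (P - {C})"
        have Cfin: "finite C" using C DVS fin finite_subset[of C V] by blast
        have evC: "even (card C)" using noodd C by blast
        have evC': "even (card (C - {x, y}))" using evC xy Cfin C(2)
          by (simp add: card_Diff_subset)
        show ?thesis
        proof (rule step[of x y S P'])
          show "x \<noteq> y" "x \<in> V" "y \<in> V" by (fact xy(3), fact xyV(1), fact xyV(2))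
          show "{x, y} \<in> E" using cl C xy by blast
          show "S \<subseteq> V - {x, y}" using SV xyV by blast
          show "\<forall>u\<in>S. \<forall>v\<in>V - {x, y}. u \<noteq> v \<longrightarrow> {u, v} \<in> E" using univ by blast
          show "\<forall>D\<in>P'. \<forall>u\<in>D. \<forall>v\<in>D. u \<noteq> v \<longrightarrow> {u, v} \<in> E"
            unfolding P'_def by (rule repl_cl[OF C(1) cl])
          have xC: "\<forall>D\<in>P - {C}. x \<notin> D \<and> y \<notin> D"
          proof
            fix D assume "D \<in> P - {C}"
            then have "D \<inter> C = {}" using dj C by blast
            then show "x \<notin> D \<and> y \<notin> D" using xy by blast
          qed
          show "\<Union>P' = (V - {x, y}) - S"
          proof
            show "\<Union>P' \<subseteq> (V - {x, y}) - S"
            proof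
              fix v assume "v \<in> \<Union>P'"
              then obtain D where D: "D \<in> P'" "v \<in> D" by blast
              show "v \<in> (V - {x, y}) - S"
              proof (cases "D = C - {x, y}")
                case True
                have vC: "v \<in> C" "v \<notin> {x, y}" using D(2) True by blast+
                have "v \<in> V - S" using DVS[OF C(1)] vC(1) by blast
                then show ?thesis using vC(2) by blast
              next
                case False
                then have D1: "D \<in> P - {C}" using D unfolding P'_def by blast
                have "v \<notin> {x, y}" using xC D1 D(2) by blast
                moreover have "v \<in> V - S" using DVS D1 D(2) by blast
                ultimately show ?thesis by blast
              qed
            qed
            show "(V - {x, y}) - S \<subseteq> \<Union>P'"
            proof
              fix v assume v: "v \<in> (V - {x, y}) - S"
              then have "v \<in> V - S" by blast
              then have "v \<in> \<Union>P" using un by simp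
              then obtain D where D: "D \<in> P" "v \<in> D" by blast
              show "v \<in> \<Union>P'"
              proof (cases "D = C")
                case True then show ?thesis using D v unfolding P'_def by blast
              next
                case False then show ?thesis using D unfolding P'_def by blast
              qed
            qed
          qed
          show "\<forall>D\<in>P'. \<forall>D'\<in>P'. D \<noteq> D' \<longrightarrow> D \<inter> D' = {}" unfolding P'_def by (rule repl_dj[OF C(1) dj])
          show "finite P'" using fP unfolding P'_def by simp
          have "{D\<in>P'. odd (card D)} = {}"
          proof (rule equals0I)
            fix D assume "D \<in> {D\<in>P'. odd (card D)}"
            then have D: "D \<in> P'" "odd (card D)" by blast+
            then have "D \<noteq> C - {x, y}" using evC' by metis
            then have "D \<in> P" using D(1) unfolding P'_def by blast
            then show False using D(2) noodd by blast
          qed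
          then have "card {D\<in>P'. odd (card D)} = 0" by (simp only: card.empty)
          then show "card {D\<in>P'. odd (card D)} \<le> card S" by linarith
        qed
      next
        case False
        have Pe: "\<forall>C\<in>P. C = {}"
        proof
          fix C assume C: "C \<in> P"
          have Cfin: "finite C" using C DVS fin finite_subset[of C V] by blast
          have "card C < 2" using False C by (meson not_le)
          moreover have "even (card C)" using noodd C by blast
          ultimately have "card C = 0" by presburger
          then show "C = {}" using Cfin by simp
        qed
        then have "\<Union>P = {}" by blast
        then have "V - S = {}" using un by simp
        then have VS: "V = S" using SV by blast
        have "card V \<noteq> 0" using Vne fin by simp
        then have "card V \<ge> 2" using ev by presburger
        then obtain x y where xy: "x \<in> V" "y \<in> V" "x \<noteq> y"
          using two_elems[OF fin] by blast
        show ?thesis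
        proof (rule step[of x y "S - {x, y}" P])
          show "x \<noteq> y" "x \<in> V" "y \<in> V" by (fact xy(3), fact xy(1), fact xy(2))
          show "{x, y} \<in> E" using univ xy VS by blast
          show "S - {x, y} \<subseteq> V - {x, y}" using SV by blast
          show "\<forall>u\<in>S - {x, y}. \<forall>v\<in>V - {x, y}. u \<noteq> v \<longrightarrow> {u, v} \<in> E" using univ by blast
          show "\<forall>D\<in>P. \<forall>u\<in>D. \<forall>v\<in>D. u \<noteq> v \<longrightarrow> {u, v} \<in> E" using cl by blast
          show "\<Union>P = (V - {x, y}) - (S - {x, y})" using Pe VS by auto
          show "\<forall>D\<in>P. \<forall>D'\<in>P. D \<noteq> D' \<longrightarrow> D \<inter> D' = {}" using dj by blast
          show "finite P" by (fact fP)
          have "{D\<in>P. odd (card D)} = {}" using noodd by blast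
          then have "card {D\<in>P. odd (card D)} = 0" by (simp only: card.empty)
          then show "card {D\<in>P. odd (card D)} \<le> card (S - {x, y})" by linarith
        qed
      qed
    qed
  qed
qed


lemma edge_ne:
  assumes "simple_graph V E" "{x, y} \<in> E"
  shows "x \<noteq> y \<and> x \<in> V \<and> y \<in> V"
proof -
  obtain u v where uv: "{x, y} = {u, v}" "u \<in> V" "v \<in> V" "u \<noteq> v"
    using assms unfolding simple_graph_def by blast
  then show ?thesis by (auto simp: doubleton_eq_iff)
qed

lemma tutte_sat:
  assumes fin: "finite V" and sg: "simple_graph V E" and ev: "even (card V)"
    and nopm: "\<not> (\<exists>f. pmf V E f)"
    and sat: "\<And>x y. x \<in> V \<Longrightarrow> y \<in> V \<Longrightarrow> x \<noteq> y \<Longrightarrow> {x, y} \<notin> E \<Longrightarrow> \<exists>f. pmf V (insert {x, y} E) f"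
  shows "\<exists>S P. S \<subseteq> V \<and> finite P \<and> \<Union>P = V - S \<and> (\<forall>C\<in>P. C \<noteq> {})
      \<and> (\<forall>C\<in>P. \<forall>D\<in>P. C \<noteq> D \<longrightarrow> C \<inter> D = {})
      \<and> (\<forall>C\<in>P. \<forall>D\<in>P. C \<noteq> D \<longrightarrow> (\<forall>x\<in>C. \<forall>y\<in>D. {x, y} \<notin> E))
      \<and> card S < card {C\<in>P. odd (card C)}"
proof -
  define S where "S = {x\<in>V. \<forall>y\<in>V. x \<noteq> y \<longrightarrow> {x, y} \<in> E}"
  define W where "W = V - S"
  define R where "R = {(u, v). {u, v} \<in> E \<and> u \<in> W \<and> v \<in> W}"
  define Q where "Q = {(u, v). u \<in> W \<and> v \<in> W \<and> (u, v) \<in> R\<^sup>*}"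
  have SV: "S \<subseteq> V" unfolding S_def by blast
  have finW: "finite W" using fin unfolding W_def by simp
  have symR: "sym R" unfolding sym_def R_def by (auto simp: insert_commute)
  have QW: "Q \<subseteq> W \<times> W" unfolding Q_def by blast
  have eq: "equiv W Q"
  proof (rule equivI)
    show "Q \<subseteq> W \<times> W" by (fact QW)
    show "refl_on W Q" unfolding refl_on_def Q_def by blast
    show "sym Q"
    proof (rule symI)
      fix u v assume "(u, v) \<in> Q"
      then have "u \<in> W" "v \<in> W" "(u, v) \<in> R\<^sup>*" unfolding Q_def by blast+
      moreover have "(v, u) \<in> R\<^sup>*" using calculation(3) sym_rtrancl[OF symR] by (meson symD)
      ultimately show "(v, u) \<in> Q" unfolding Q_def by blast
    qed
    show "trans Q"
    proof (rule transI)
      fix u v w assume "(u, v) \<in> Q" "(v, w) \<in> Q"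
      then show "(u, w) \<in> Q" unfolding Q_def by (auto intro: rtrancl_trans)
    qed
  qed
  define P where "P = W // Q"
  have finP: "finite P" unfolding P_def by (rule finite_quotient[OF finW QW])
  have unP: "\<Union>P = V - S" unfolding P_def W_def[symmetric] by (rule Union_quotient[OF eq])
  have neP: "\<forall>C\<in>P. C \<noteq> {}" unfolding P_def using in_quotient_imp_non_empty[OF eq] by blast
  have djP: "\<forall>C\<in>P. \<forall>D\<in>P. C \<noteq> D \<longrightarrow> C \<inter> D = {}"
    unfolding P_def using quotient_disj[OF eq] by blast
  have CW: "C \<subseteq> W" if "C \<in> P" for C
    using in_quotient_imp_subset[OF eq] that unfolding P_def by blast
  have crP: "\<forall>C\<in>P. \<forall>D\<in>P. C \<noteq> D \<longrightarrow> (\<forall>x\<in>C. \<forall>y\<in>D. {x, y} \<notin> E)"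
  proof (intro ballI impI)
    fix C D x y assume C: "C \<in> P" and D: "D \<in> P" and ne: "C \<noteq> D" and x: "x \<in> C" and y: "y \<in> D"
    show "{x, y} \<notin> E"
    proof
      assume e: "{x, y} \<in> E"
      have "x \<in> W" "y \<in> W" using CW C D x y by blast+
      then have "(x, y) \<in> R" using e unfolding R_def by blast
      then have "(x, y) \<in> Q" unfolding Q_def using \<open>x \<in> W\<close> \<open>y \<in> W\<close> by blast
      then have "C = D" using quotient_eqI[OF eq _ _ x y] C D unfolding P_def by blast
      then show False using ne by simp
    qed
  qed
  have "card S < card {C\<in>P. odd (card C)}"
  proof (rule ccontr)
    assume "\<not> ?thesis"
    then have oc: "card {C\<in>P. odd (card C)} \<le> card S" by simp
    have cl: "\<forall>C\<in>P. \<forall>x\<in>C. \<forall>y\<in>C. x \<noteq> y \<longrightarrow> {x, y} \<in> E"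
    proof (intro ballI impI)
      fix C x y assume C: "C \<in> P" and x: "x \<in> C" and y: "y \<in> C" and xy: "x \<noteq> y"
      show "{x, y} \<in> E"
      proof (rule ccontr)
        assume nxy: "{x, y} \<notin> E"
        have "(x, y) \<in> Q" using in_quotient_imp_in_rel[OF eq] C x y unfolding P_def by blast
        then have "(x, y) \<in> R\<^sup>*" unfolding Q_def by blast
        moreover have "(x, y) \<notin> R" using nxy unfolding R_def by blast
        ultimately obtain b c where bc: "(x, b) \<in> R" "(b, c) \<in> R" "c \<noteq> x" "(x, c) \<notin> R"
          using p3[of x y R] xy by blast
        have xb: "{x, b} \<in> E" "x \<in> W" "b \<in> W" using bc(1) unfolding R_def by blast+
        have bc': "{b, c} \<in> E" "c \<in> W" using bc(2) unfolding R_def by blast+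
        have nxc: "{x, c} \<notin> E" using bc(4) xb(2) bc'(2) unfolding R_def by blast
        have "b \<notin> S" using xb(3) unfolding W_def by blast
        moreover have bV: "b \<in> V" using xb(3) unfolding W_def by blast
        ultimately obtain d where d: "d \<in> V" "b \<noteq> d" "{b, d} \<notin> E" unfolding S_def by blast
        have xV: "x \<in> V" and cV: "c \<in> V" using xb(2) bc'(2) unfolding W_def by blast+
        have bx: "b \<noteq> x" using edge_ne[OF sg xb(1)] by blast
        have bc2: "b \<noteq> c" using edge_ne[OF sg bc'(1)] by blast
        obtain f1 where f1: "pmf V (insert {x, c} E) f1" using sat[OF xV cV bc(3)[symmetric] nxc] by blast
        obtain f2 where f2: "pmf V (insert {b, d} E) f2" using sat[OF bV d(1) d(2) d(3)] by blast
        have f1x: "f1 x = c"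
        proof (rule ccontr)
          assume "f1 x \<noteq> c"
          then have "pmf V E f1" using pmf_notuse[OF f1 xV] by blast
          then show False using nopm by blast
        qed
        have f2b: "f2 b = d"
        proof (rule ccontr)
          assume "f2 b \<noteq> d"
          then have "pmf V E f2" using pmf_notuse[OF f2 bV] by blast
          then show False using nopm by blast
        qed
        have "\<exists>f. pmf V E f"
          by (rule swap[OF fin f1 f2 f1x f2b xV bV cV d(1) xb(1) bc'(1) bx bc2])
        then show False using nopm by blast
      qed
    qed
    have univ: "\<forall>x\<in>S. \<forall>y\<in>V. x \<noteq> y \<longrightarrow> {x, y} \<in> E" unfolding S_def by blast
    have "\<exists>f. pmf V E f" by (rule blocks[OF fin ev SV univ cl unP djP finP oc])
    then show False using nopm by blast
  qed
  then show ?thesis using SV finP unP neP djP crP by blast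
qed

lemma tutte:
  assumes fin: "finite V" and sg: "simple_graph V E" and ev: "even (card V)"
    and nopm: "\<not> (\<exists>f. pmf V E f)"
  shows "\<exists>S P. S \<subseteq> V \<and> finite P \<and> \<Union>P = V - S \<and> (\<forall>C\<in>P. C \<noteq> {})
      \<and> (\<forall>C\<in>P. \<forall>D\<in>P. C \<noteq> D \<longrightarrow> C \<inter> D = {})
      \<and> (\<forall>C\<in>P. \<forall>D\<in>P. C \<noteq> D \<longrightarrow> (\<forall>x\<in>C. \<forall>y\<in>D. {x, y} \<notin> E))
      \<and> card S < card {C\<in>P. odd (card C)}"
proof -
  define Cand where "Cand = {E'. E \<subseteq> E' \<and> E' \<subseteq> Pow V \<and> simple_graph V E' \<and> \<not> (\<exists>f. pmf V E' f)}"
  have "Cand \<subseteq> Pow (Pow V)" unfolding Cand_def by blast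
  then have finC: "finite Cand" using fin by (meson finite_Pow_iff finite_subset)
  have EP: "E \<subseteq> Pow V"
  proof
    fix e assume "e \<in> E"
    then obtain u v where "e = {u, v}" "u \<in> V" "v \<in> V" using sg unfolding simple_graph_def by blast
    then show "e \<in> Pow V" by blast
  qed
  have "E \<in> Cand" unfolding Cand_def using EP sg nopm by blast
  then obtain E' where E': "E' \<in> Cand" and mx: "\<forall>b\<in>Cand. E' \<le> b \<longrightarrow> E' = b"
    using finite_has_maximal[OF finC] by blast
  have EE': "E \<subseteq> E'" and E'P: "E' \<subseteq> Pow V" and sg': "simple_graph V E'" and nopm': "\<not> (\<exists>f. pmf V E' f)"
    using E' unfolding Cand_def by blast+
  have sat: "\<exists>f. pmf V (insert {x, y} E') f"
    if xy: "x \<in> V" "y \<in> V" "x \<noteq> y" "{x, y} \<notin> E'" for x y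
  proof (rule ccontr)
    assume nf: "\<not> ?thesis"
    have "simple_graph V (insert {x, y} E')" using sg' xy fin unfolding simple_graph_def by blast
    moreover have "insert {x, y} E' \<subseteq> Pow V" using E'P xy by blast
    ultimately have "insert {x, y} E' \<in> Cand" using EE' nf unfolding Cand_def by blast
    then have "E' = insert {x, y} E'" using mx by blast
    then show False using xy(4) by blast
  qed
  obtain S P where SP: "S \<subseteq> V \<and> finite P \<and> \<Union>P = V - S \<and> (\<forall>C\<in>P. C \<noteq> {})
      \<and> (\<forall>C\<in>P. \<forall>D\<in>P. C \<noteq> D \<longrightarrow> C \<inter> D = {})
      \<and> (\<forall>C\<in>P. \<forall>D\<in>P. C \<noteq> D \<longrightarrow> (\<forall>x\<in>C. \<forall>y\<in>D. {x, y} \<notin> E'))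
      \<and> card S < card {C\<in>P. odd (card C)}"
  proof -
    have ex: "\<exists>S P. S \<subseteq> V \<and> finite P \<and> \<Union>P = V - S \<and> (\<forall>C\<in>P. C \<noteq> {})
      \<and> (\<forall>C\<in>P. \<forall>D\<in>P. C \<noteq> D \<longrightarrow> C \<inter> D = {})
      \<and> (\<forall>C\<in>P. \<forall>D\<in>P. C \<noteq> D \<longrightarrow> (\<forall>x\<in>C. \<forall>y\<in>D. {x, y} \<notin> E'))
      \<and> card S < card {C\<in>P. odd (card C)}"
      apply (rule tutte_sat[OF fin sg' ev nopm'])
      apply (rule sat)
         apply assumption+
      done
    then show ?thesis by (elim exE) (rule that)
  qed
  note SP1 = conjunct1[OF SP] and SP2 = conjunct2[OF SP]
  note SP3 = conjunct1[OF SP2] and SP4 = conjunct2[OF SP2]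
  note SP5 = conjunct1[OF SP4] and SP6 = conjunct2[OF SP4]
  note SP7 = conjunct1[OF SP6] and SP8 = conjunct2[OF SP6]
  note SP9 = conjunct1[OF SP8] and SP10 = conjunct2[OF SP8]
  note SP11 = conjunct1[OF SP10] and SP12 = conjunct2[OF SP10]
  have cr: "\<forall>C\<in>P. \<forall>D\<in>P. C \<noteq> D \<longrightarrow> (\<forall>x\<in>C. \<forall>y\<in>D. {x, y} \<notin> E)"
  proof (intro ballI impI)
    fix C D x y assume "C \<in> P" "D \<in> P" "C \<noteq> D" "x \<in> C" "y \<in> D"
    then have "{x, y} \<notin> E'" using SP11 by blast
    then show "{x, y} \<notin> E" using EE' by blast
  qed
  show ?thesis
    by (rule exI[of _ S], rule exI[of _ P]) (intro conjI SP1 SP3 SP5 SP7 SP9 cr SP12)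
qed


lemma pair_sum:
  fixes f :: "'a \<Rightarrow> real"
  assumes fin: "finite P" and c2: "card P \<ge> 2"
    and pr: "\<forall>C\<in>P. \<forall>D\<in>P. C \<noteq> D \<longrightarrow> f C + f D \<ge> L"
  shows "2 * sum f P \<ge> real (card P) * L"
proof -
  have "P \<noteq> {}" using c2 by auto
  then have "f ` P \<noteq> {}" by simp
  then obtain m where m: "m \<in> f ` P" "\<not> (\<exists>x\<in>f ` P. x < m)"
    using ex_min_if_finite[of "f ` P"] fin by blast
  then obtain C0 where C0: "C0 \<in> P" "f C0 = m" by blast
  have minC: "f C0 \<le> f C" if "C \<in> P" for C using m C0 that by force
  define a where "a = f C0"
  define M where "M = max a (L - a)"
  have lo: "M \<le> f C" if "C \<in> P - {C0}" for C
  proof -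
    have "a \<le> f C" using minC that unfolding a_def by blast
    moreover have "L - a \<le> f C" using pr that C0(1) unfolding a_def by force
    ultimately show ?thesis unfolding M_def by simp
  qed
  have "real (card (P - {C0})) * M \<le> sum f (P - {C0})"
    using sum_bounded_below[of "P - {C0}" M f] lo by blast
  moreover have "card (P - {C0}) = card P - 1" using C0 fin by simp
  moreover have "sum f P = a + sum f (P - {C0})" using C0 fin unfolding a_def
    by (simp add: sum.remove)
  ultimately have s1: "sum f P \<ge> a + real (card P - 1) * M" by simp
  have "real (card P - 1) = real (card P) - 1" using c2 by simp
  then have s2: "sum f P \<ge> a + (real (card P) - 1) * M" using s1 by simp
  have Ma: "M \<ge> a" "M \<ge> L - a" unfolding M_def by auto
  then have "2 * M \<ge> L" by simp
  moreover have "real (card P) - 2 \<ge> 0" using c2 by simp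
  ultimately have "(real (card P) - 2) * (2 * M) \<ge> (real (card P) - 2) * L"
    by (simp add: mult_left_mono)
  then have "2 * ((real (card P) - 1) * M) \<ge> 2 * M + (real (card P) - 2) * L"
    by (simp add: algebra_simps)
  then show ?thesis using s2 Ma by (simp add: algebra_simps)
qed

lemma arith1:
  fixes N s c g :: real
  assumes g: "0 < g" "g \<le> 1/6" and N: "N \<ge> 37" and s: "s \<ge> 1" and c: "c \<ge> s + 2" "N - s \<ge> c"
    and H: "N - g * N - 2 * s + 2 > 0 \<Longrightarrow> 2 * (N - s) \<ge> c * (N - g * N - 2 * s + 2)"
  shows "N - 2 * s \<le> g * N + 4"
proof (rule ccontr)
  assume "\<not> ?thesis"
  then have t: "N - 2 * s > g * N + 4" by simp
  define L where "L = N - g * N - 2 * s + 2"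
  have L6: "L > 6" using t unfolding L_def by simp
  have H2: "2 * (N - s) \<ge> c * L" using H L6 unfolding L_def by simp
  have "c * L \<ge> (s + 2) * L" using c(1) L6 by (simp add: mult_right_mono)
  then have H3: "2 * (N - s) \<ge> (s + 2) * L" using H2 by simp
  have "(s + 2) * 6 \<le> (s + 2) * L" by (rule mult_left_mono) (use L6 s in auto)
  then have s4: "s < N / 4" using H3 by simp
  have gN: "g * N \<le> N / 6" using g N by simp
  have "L \<ge> N / 3" using s4 gN unfolding L_def by simp
  then have "(s + 2) * (N / 3) \<le> (s + 2) * L" by (rule mult_left_mono) (use s in auto)
  also have "\<dots> \<le> 2 * (N - s)" by (rule H3)
  also have "\<dots> \<le> 2 * N" using s by simp
  finally have "(s + 2) * (N / 3) \<le> 2 * N" .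
  then have "(s + 2) * N \<le> 6 * N" by (simp add: algebra_simps)
  then have "s + 2 \<le> 6" using N by (simp add: mult_le_cancel_right)
  then have "L \<ge> 5 * N / 6 - 6" using gN unfolding L_def by simp
  moreover have "(s + 2) * L \<ge> 3 * L" using s L6 by (simp add: mult_right_mono)
  ultimately have "2 * (N - s) \<ge> 3 * (5 * N / 6 - 6)" using H3 by simp
  then show False using N s by simp
qed

lemma sigma_le:
  assumes sig: "sigma V E \<ge> ereal r" and xy: "x \<in> V" "y \<in> V" "x \<noteq> y" "{x, y} \<notin> E"
  shows "r \<le> real (degree V E x + degree V E y)"
proof -
  have "(x, y) \<in> {(x, y). x \<in> V \<and> y \<in> V \<and> x \<noteq> y \<and> {x, y} \<notin> E}" using xy by blast
  then have "sigma V E \<le> ereal (real (degree V E (fst (x, y)) + degree V E (snd (x, y))))"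
    unfolding sigma_def by (rule INF_lower)
  then have "sigma V E \<le> ereal (real (degree V E x + degree V E y))" by simp
  with sig have "ereal r \<le> ereal (real (degree V E x + degree V E y))" by (rule order.trans)
  then show ?thesis by simp
qed

lemma deg_bound:
  assumes sg: "simple_graph V E" and fin: "finite V" and x: "x \<in> C" and CV: "C \<subseteq> V" and SV: "S \<subseteq> V"
    and nb: "\<forall>y\<in>V. {x, y} \<in> E \<longrightarrow> y \<in> C \<union> S"
  shows "degree V E x \<le> card C - 1 + card S"
proof -
  have "{y \<in> V. {x, y} \<in> E} \<subseteq> (C - {x}) \<union> S"
  proof
    fix y assume y: "y \<in> {y \<in> V. {x, y} \<in> E}"
    then have "y \<noteq> x" using edge_ne[OF sg] by blast
    then show "y \<in> (C - {x}) \<union> S" using nb y by blast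
  qed
  moreover have "finite ((C - {x}) \<union> S)" using fin CV SV finite_subset by blast
  ultimately have "card {y \<in> V. {x, y} \<in> E} \<le> card ((C - {x}) \<union> S)" by (rule card_mono[rotated])
  also have "\<dots> \<le> card (C - {x}) + card S" by (rule card_Un_le)
  also have "card (C - {x}) = card C - 1" using x by simp
  finally show ?thesis unfolding degree_def .
qed


lemma closed_reach:
  assumes "(x, y) \<in> {(u, v). {u, v} \<in> E}\<^sup>*" "x \<in> A" "\<forall>z\<in>A. \<forall>w. {z, w} \<in> E \<longrightarrow> w \<in> A"
  shows "y \<in> A"
  using assms by (induction rule: rtrancl_induct) auto

lemma class_eq:
  assumes sg: "simple_graph V E" and AV: "A \<subseteq> V" and x: "x \<in> A"
    and cl: "\<forall>z\<in>A. \<forall>w. {z, w} \<in> E \<longrightarrow> w \<in> A"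
    and conn: "\<forall>y\<in>A. x \<noteq> y \<longrightarrow> {x, y} \<in> E \<or> (\<exists>z\<in>V. {x, z} \<in> E \<and> {z, y} \<in> E)"
  shows "reach V E `` {x} = A"
proof
  show "reach V E `` {x} \<subseteq> A"
  proof
    fix y assume "y \<in> reach V E `` {x}"
    then have "(x, y) \<in> {(u, v). {u, v} \<in> E}\<^sup>*" unfolding reach_def by blast
    then show "y \<in> A" using closed_reach x cl by metis
  qed
  show "A \<subseteq> reach V E `` {x}"
  proof
    fix y assume y: "y \<in> A"
    have "(x, y) \<in> {(u, v). {u, v} \<in> E}\<^sup>*"
    proof (cases "x = y")
      case True then show ?thesis by simp
    next
      case False
      then have "{x, y} \<in> E \<or> (\<exists>z\<in>V. {x, z} \<in> E \<and> {z, y} \<in> E)" using conn y by blast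
      then show ?thesis
      proof
        assume "{x, y} \<in> E" then show ?thesis by (intro r_into_rtrancl) simp
      next
        assume "\<exists>z\<in>V. {x, z} \<in> E \<and> {z, y} \<in> E"
        then obtain z where z: "{x, z} \<in> E" "{z, y} \<in> E" by blast
        have "(x, z) \<in> {(u, v). {u, v} \<in> E}\<^sup>*" using z(1) by (intro r_into_rtrancl) simp
        moreover have "(z, y) \<in> {(u, v). {u, v} \<in> E}" using z(2) by simp
        ultimately show ?thesis by (rule rtrancl_into_rtrancl)
      qed
    qed
    moreover have "x \<in> V" "y \<in> V" using x y AV by blast+
    ultimately show "y \<in> reach V E `` {x}" unfolding reach_def by blast
  qed
qed

lemma comp_two:
  assumes sg: "simple_graph V E" and V: "V = C1 \<union> C2" and dj: "C1 \<inter> C2 = {}"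
    and ne: "C1 \<noteq> {}" "C2 \<noteq> {}"
    and noe: "\<forall>x\<in>C1. \<forall>y\<in>C2. {x, y} \<notin> E"
    and conn1: "\<forall>x\<in>C1. \<forall>y\<in>C1. x \<noteq> y \<longrightarrow> {x, y} \<in> E \<or> (\<exists>z\<in>V. {x, z} \<in> E \<and> {z, y} \<in> E)"
    and conn2: "\<forall>x\<in>C2. \<forall>y\<in>C2. x \<noteq> y \<longrightarrow> {x, y} \<in> E \<or> (\<exists>z\<in>V. {x, z} \<in> E \<and> {z, y} \<in> E)"
  shows "components V E = {C1, C2}"
proof -
  have cl1: "\<forall>z\<in>C1. \<forall>w. {z, w} \<in> E \<longrightarrow> w \<in> C1"
  proof (intro ballI allI impI)
    fix z w assume z: "z \<in> C1" and e: "{z, w} \<in> E"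
    have "w \<in> V" using edge_ne[OF sg e] by blast
    moreover have "w \<notin> C2" using noe z e by blast
    ultimately show "w \<in> C1" using V by blast
  qed
  have cl2: "\<forall>z\<in>C2. \<forall>w. {z, w} \<in> E \<longrightarrow> w \<in> C2"
  proof (intro ballI allI impI)
    fix z w assume z: "z \<in> C2" and e: "{z, w} \<in> E"
    have "w \<in> V" using edge_ne[OF sg e] by blast
    moreover have "w \<notin> C1"
    proof
      assume "w \<in> C1"
      then have "{w, z} \<notin> E" using noe z by blast
      then show False using e by (simp add: insert_commute)
    qed
    ultimately show "w \<in> C2" using V by blast
  qed
  have e1: "reach V E `` {x} = C1" if "x \<in> C1" for x
    using class_eq[OF sg _ that cl1] conn1 that V by blast
  have e2: "reach V E `` {x} = C2" if "x \<in> C2" for x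
    using class_eq[OF sg _ that cl2] conn2 that V by blast
  show ?thesis
    unfolding components_def quotient_def
  proof
    show "(\<Union>x\<in>V. {reach V E `` {x}}) \<subseteq> {C1, C2}" using e1 e2 V by blast
    obtain a b where "a \<in> C1" "b \<in> C2" using ne by blast
    then show "{C1, C2} \<subseteq> (\<Union>x\<in>V. {reach V E `` {x}})" using e1 e2 V by blast
  qed
qed


lemma conn_dense:
  assumes sg: "simple_graph V E" and fin: "finite V" and V: "V = A \<union> B" and dj: "A \<inter> B = {}"
    and Bne: "B \<noteq> {}"
    and noe: "\<forall>x\<in>A. \<forall>y\<in>B. {x, y} \<notin> E"
    and degA: "\<forall>x\<in>A. degree V E x \<le> card A - 1" and degB: "\<forall>x\<in>B. degree V E x \<le> card B - 1"
    and sig: "sigma V E \<ge> ereal (real n - g * real n)" and cV: "card V = n" and g: "g \<le> 1/6"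
  shows "\<forall>x\<in>A. \<forall>y\<in>A. x \<noteq> y \<longrightarrow> {x, y} \<in> E \<or> (\<exists>z\<in>V. {x, z} \<in> E \<and> {z, y} \<in> E)"
proof (intro ballI impI)
  fix x y assume x: "x \<in> A" and y: "y \<in> A" and xy: "x \<noteq> y"
  show "{x, y} \<in> E \<or> (\<exists>z\<in>V. {x, z} \<in> E \<and> {z, y} \<in> E)"
  proof (rule ccontr)
    assume "\<not> ?thesis"
    then have nxy: "{x, y} \<notin> E" and nz: "\<forall>z\<in>V. \<not> ({x, z} \<in> E \<and> {z, y} \<in> E)" by blast+
    define Nx where "Nx = {z \<in> V. {x, z} \<in> E}"
    define Ny where "Ny = {z \<in> V. {y, z} \<in> E}"
    have finA: "finite A" using fin V by simp
    have disj: "Nx \<inter> Ny = {}"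
    proof (rule equals0I)
      fix z assume "z \<in> Nx \<inter> Ny"
      then have "z \<in> V" "{x, z} \<in> E" "{y, z} \<in> E" unfolding Nx_def Ny_def by blast+
      then show False using nz by (metis insert_commute)
    qed
    have sub: "Nx \<union> Ny \<subseteq> A - {x, y}"
    proof
      fix z assume z: "z \<in> Nx \<union> Ny"
      show "z \<in> A - {x, y}"
      proof (cases "z \<in> Nx")
        case True
        then have zz: "z \<in> V" "{x, z} \<in> E" unfolding Nx_def by blast+
        have "z \<noteq> x" using edge_ne[OF sg zz(2)] by blast
        moreover have "z \<noteq> y" using zz nxy by blast
        moreover have "z \<notin> B" using noe x zz(2) by blast
        ultimately show ?thesis using zz(1) V by blast
      next
        case False
        then have zz: "z \<in> V" "{y, z} \<in> E" using z unfolding Ny_def by blast+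
        have "z \<noteq> y" using edge_ne[OF sg zz(2)] by blast
        moreover have "z \<noteq> x" using zz nxy by (metis insert_commute)
        moreover have "z \<notin> B" using noe y zz(2) by blast
        ultimately show ?thesis using zz(1) V by blast
      qed
    qed
    have fN: "finite Nx" "finite Ny" using fin unfolding Nx_def Ny_def by simp_all
    have "card Nx + card Ny = card (Nx \<union> Ny)" using card_Un_disjoint[OF fN disj] by simp
    also have "\<dots> \<le> card (A - {x, y})" using card_mono[OF _ sub] finA by simp
    also have "\<dots> = card A - 2" using x y xy finA by (simp add: card_Diff_subset)
    finally have s1: "degree V E x + degree V E y \<le> card A - 2"
      unfolding degree_def Nx_def Ny_def .
    have cA2: "card A \<ge> 2"
    proof -
      have "card {x, y} \<le> card A" using x y finA by (intro card_mono) auto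
      then show ?thesis using xy by simp
    qed
    obtain w where w: "w \<in> B" using Bne by blast
    have wV: "w \<in> V" and xV: "x \<in> V" and yV: "y \<in> V" using w x y V by blast+
    have xw: "x \<noteq> w" "y \<noteq> w" using x y w dj by blast+
    have nxw: "{x, w} \<notin> E" "{y, w} \<notin> E" using noe x y w by blast+
    have a1: "real n - g * real n \<le> real (degree V E x + degree V E y)"
      by (rule sigma_le[OF sig xV yV xy nxy])
    have a2: "real n - g * real n \<le> real (degree V E x + degree V E w)"
      by (rule sigma_le[OF sig xV wV xw(1) nxw(1)])
    have a3: "real n - g * real n \<le> real (degree V E y + degree V E w)"
      by (rule sigma_le[OF sig yV wV xw(2) nxw(2)])
    have dw: "degree V E w \<le> card B - 1" using degB w by blast
    have cB1: "card B \<ge> 1" using w fin V by (metis One_nat_def Suc_leI card_gt_0_iff finite_Un ex_in_conv Bne)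
    have sumAB: "card A + card B = n" using cV V dj fin by (simp add: card_Un_disjoint)
    have r1: "real (degree V E x) + real (degree V E y) \<le> real (card A) - 2"
      using s1 cA2 by linarith
    have r2: "real (degree V E w) \<le> real (card B) - 1" using dw cB1 by linarith
    have r3: "real (card A) + real (card B) = real n" using sumAB by linarith
    have gn: "g * real n \<le> (1/6) * real n" using g by (intro mult_right_mono) auto
    show False using a1 a2 a3 r1 r2 r3 gn by linarith
  qed
qed


lemma main_lemma:
  fixes g :: real and V :: "'a set"
  assumes g: "0 < g" "g \<le> 1/6" and nev: "even n" and n37: "real n \<ge> 37" and ng: "real n \<ge> 2 / g"
    and sg: "simple_graph V E" and cV: "card V = n"
    and sig: "sigma V E \<ge> ereal (real n - g * real n)"
    and nopm: "\<not> has_perfect_matching V E"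
  shows "(\<exists>S. gamma_independent V E (2 * g) S \<and> real (card S) \<ge> real n / 2)
      \<or> (\<exists>C1 C2. components V E = {C1, C2} \<and> C1 \<noteq> C2 \<and> odd (card C1) \<and> odd (card C2) \<and>
                 (\<forall>C \<in> {C1, C2}. real (card C) \<le> (1 - g) / 2 * real n \<longrightarrow> clique E C))"
proof -
  have fin: "finite V" using sg unfolding simple_graph_def by blast
  have nopmf: "\<not> (\<exists>f. pmf V E f)" using pmf_imp_pm nopm by blast
  have evV: "even (card V)" using nev cV by simp
  obtain S P where SV: "S \<subseteq> V" and finP: "finite P" and unP: "\<Union>P = V - S"
    and neP: "\<forall>C\<in>P. C \<noteq> {}" and djP: "\<forall>C\<in>P. \<forall>D\<in>P. C \<noteq> D \<longrightarrow> C \<inter> D = {}"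
    and crP: "\<forall>C\<in>P. \<forall>D\<in>P. C \<noteq> D \<longrightarrow> (\<forall>x\<in>C. \<forall>y\<in>D. {x, y} \<notin> E)"
    and oc: "card S < card {C\<in>P. odd (card C)}"
  proof -
    have ex: "\<exists>S P. S \<subseteq> V \<and> finite P \<and> \<Union>P = V - S \<and> (\<forall>C\<in>P. C \<noteq> {})
      \<and> (\<forall>C\<in>P. \<forall>D\<in>P. C \<noteq> D \<longrightarrow> C \<inter> D = {})
      \<and> (\<forall>C\<in>P. \<forall>D\<in>P. C \<noteq> D \<longrightarrow> (\<forall>x\<in>C. \<forall>y\<in>D. {x, y} \<notin> E))
      \<and> card S < card {C\<in>P. odd (card C)}"
      by (rule tutte[OF fin sg evV nopmf])
    then show ?thesis by (elim exE conjE) (rule that)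
  qed
  define s where "s = card S"
  define k where "k = card {C\<in>P. odd (card C)}"
  define c where "c = card P"
  have finS: "finite S" using SV fin finite_subset by blast
  have CV: "C \<subseteq> V - S" if "C \<in> P" for C using unP that by blast
  have finC: "finite C" if "C \<in> P" for C using CV[OF that] fin finite_subset by blast
  have sumP: "(\<Sum>C\<in>P. card C) = n - s"
  proof -
    have "pairwise disjnt P" using djP unfolding pairwise_def disjnt_def by blast
    then have "card (\<Union>P) = (\<Sum>C\<in>P. card C)" using card_Union_disjoint finC by blast
    moreover have "card (V - S) = n - s" using SV finS cV unfolding s_def by (simp add: card_Diff_subset)
    ultimately show ?thesis using unP by simp
  qed
  have sn: "s \<le> n" using SV fin cV card_mono unfolding s_def by blast
  have par: "even (n - s) \<longleftrightarrow> even k"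
    using even_sum_iff[OF finP, of card] sumP unfolding k_def by simp
  have ks: "k \<ge> s + 2" using par oc nev sn unfolding k_def s_def by presburger
  have kc: "k \<le> c" unfolding k_def c_def using finP by (intro card_mono) auto
  have cn: "c \<le> n - s"
  proof -
    have "\<forall>C\<in>P. 1 \<le> card C" using neP finC by (simp add: Suc_leI card_gt_0_iff)
    then have "of_nat (card P) * 1 \<le> (\<Sum>C\<in>P. card C)" using sum_bounded_below[of P 1 card] by blast
    then show ?thesis using sumP unfolding c_def by simp
  qed
  have deg: "degree V E x \<le> card C - 1 + s" if C: "C \<in> P" and x: "x \<in> C" for C x
  proof -
    have nb: "\<forall>y\<in>V. {x, y} \<in> E \<longrightarrow> y \<in> C \<union> S"
    proof (intro ballI impI)
      fix y assume y: "y \<in> V" and e: "{x, y} \<in> E"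
      show "y \<in> C \<union> S"
      proof (cases "y \<in> S")
        case True then show ?thesis by blast
      next
        case False
        then have "y \<in> \<Union>P" using y unP by blast
        then obtain D where D: "D \<in> P" "y \<in> D" by blast
        have "C = D"
        proof (rule ccontr)
          assume "C \<noteq> D"
          then have "{x, y} \<notin> E" using crP C D x by blast
          then show False using e by simp
        qed
        then show ?thesis using D by blast
      qed
    qed
    have "C \<subseteq> V" using CV[OF C] by blast
    then show ?thesis using deg_bound[OF sg fin x _ SV nb] unfolding s_def by blast
  qed
  define L where "L = real n - g * real n - 2 * real s + 2"
  have pair: "real (card C) + real (card D) \<ge> L" if C: "C \<in> P" and D: "D \<in> P" and CD: "C \<noteq> D" for C D
  proof -
    obtain x where x: "x \<in> C" using neP C by blast
    obtain y where y: "y \<in> D" using neP D by blast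
    have xy: "x \<noteq> y" using djP C D CD x y by blast
    have nxy: "{x, y} \<notin> E" using crP C D CD x y by blast
    have xV: "x \<in> V" "y \<in> V" using CV C D x y by blast+
    have "real n - g * real n \<le> real (degree V E x + degree V E y)"
      by (rule sigma_le[OF sig xV xy nxy])
    moreover have "degree V E x \<le> card C - 1 + s" by (rule deg[OF C x])
    moreover have "degree V E y \<le> card D - 1 + s" by (rule deg[OF D y])
    moreover have "card C \<ge> 1" "card D \<ge> 1" using x y finC C D
      by (metis One_nat_def Suc_leI card_gt_0_iff empty_iff)+
    ultimately show ?thesis unfolding L_def by linarith
  qed
  have c2: "c \<ge> 2" using ks kc by simp
  have psum: "2 * (\<Sum>C\<in>P. real (card C)) \<ge> real c * L"
    using pair_sum[OF finP c2[unfolded c_def], where f="\<lambda>C. real (card C)" and L=L] pair unfolding c_def by blast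
  have rsum: "(\<Sum>C\<in>P. real (card C)) = real n - real s"
    using sumP sn by (metis of_nat_diff of_nat_sum)
  have psum2: "2 * (real n - real s) \<ge> real c * L" using psum rsum by simp
  show ?thesis
  proof (cases "s = 0")
    case s0: True
    have S0: "S = {}" using s0 finS unfolding s_def by simp
    have c3: "c = 2"
    proof (rule ccontr)
      assume "c \<noteq> 2"
      then have "real c \<ge> 3" using c2 by simp
      moreover have gn: "g * real n \<le> (1/6) * real n" using g by (intro mult_right_mono) auto
      moreover have Lp: "L \<ge> 0" unfolding L_def using s0 gn by simp
      ultimately have "3 * L \<le> real c * L" by (intro mult_right_mono) auto
      moreover have "real s = 0" using s0 by simp
      then have "L = real n - g * real n + 2" unfolding L_def by simp
      moreover have "3 * L \<le> 2 * real n" using psum2 \<open>3 * L \<le> real c * L\<close> \<open>real s = 0\<close> by simp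
      ultimately show False using gn n37 by simp
    qed
    have k2: "k = 2" using ks kc c3 s0 by simp
    have oddP: "{C\<in>P. odd (card C)} = P"
    proof (rule card_subset_eq[OF finP])
      show "{C\<in>P. odd (card C)} \<subseteq> P" by blast
      show "card {C\<in>P. odd (card C)} = card P" using k2 c3 unfolding k_def c_def by simp
    qed
    obtain C1 C2 where P12: "P = {C1, C2}" and C12: "C1 \<noteq> C2" using c3 unfolding c_def card_2_iff by blast
    have C1P: "C1 \<in> P" and C2P: "C2 \<in> P" using P12 by blast+
    have odd1: "odd (card C1)" and odd2: "odd (card C2)" using oddP C1P C2P by blast+
    have V12: "V = C1 \<union> C2" using unP S0 P12 by simp
    have dj12: "C1 \<inter> C2 = {}" using djP C1P C2P C12 by blast
    have ne12: "C1 \<noteq> {}" "C2 \<noteq> {}" using neP C1P C2P by blast+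
    have noe: "\<forall>x\<in>C1. \<forall>y\<in>C2. {x, y} \<notin> E" using crP C1P C2P C12 by blast
    have noe2: "\<forall>x\<in>C2. \<forall>y\<in>C1. {x, y} \<notin> E" using noe by (metis insert_commute)
    have deg1: "\<forall>x\<in>C1. degree V E x \<le> card C1 - 1" using deg[OF C1P] s0 by simp
    have deg2: "\<forall>x\<in>C2. degree V E x \<le> card C2 - 1" using deg[OF C2P] s0 by simp
    have conn1: "\<forall>x\<in>C1. \<forall>y\<in>C1. x \<noteq> y \<longrightarrow> {x, y} \<in> E \<or> (\<exists>z\<in>V. {x, z} \<in> E \<and> {z, y} \<in> E)"
      by (rule conn_dense[OF sg fin V12 dj12 ne12(2) noe deg1 deg2 sig cV g(2)])
    have V21: "V = C2 \<union> C1" using V12 by blast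
    have dj21: "C2 \<inter> C1 = {}" using dj12 by blast
    have conn2: "\<forall>x\<in>C2. \<forall>y\<in>C2. x \<noteq> y \<longrightarrow> {x, y} \<in> E \<or> (\<exists>z\<in>V. {x, z} \<in> E \<and> {z, y} \<in> E)"
      by (rule conn_dense[OF sg fin V21 dj21 ne12(1) noe2 deg2 deg1 sig cV g(2)])
    have comp: "components V E = {C1, C2}"
      by (rule comp_two[OF sg V12 dj12 ne12 noe conn1 conn2])
    have clq: "\<forall>C \<in> {C1, C2}. real (card C) \<le> (1 - g) / 2 * real n \<longrightarrow> clique E C"
    proof (intro ballI impI)
      fix C assume C: "C \<in> {C1, C2}" and small: "real (card C) \<le> (1 - g) / 2 * real n"
      have CP: "C \<in> P" using C P12 by blast
      show "clique E C" unfolding clique_def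
      proof (intro ballI impI)
        fix x y assume x: "x \<in> C" and y: "y \<in> C" and xy: "x \<noteq> y"
        show "{x, y} \<in> E"
        proof (rule ccontr)
          assume nxy: "{x, y} \<notin> E"
          have xV: "x \<in> V" "y \<in> V" using CV CP x y by blast+
          have "real n - g * real n \<le> real (degree V E x + degree V E y)"
            by (rule sigma_le[OF sig xV xy nxy])
          moreover have "degree V E x \<le> card C - 1" "degree V E y \<le> card C - 1"
            using deg[OF CP x] deg[OF CP y] s0 by simp_all
          moreover have "card C \<ge> 1" using x finC[OF CP] by (metis One_nat_def Suc_leI card_gt_0_iff empty_iff)
          ultimately have "real n - g * real n \<le> 2 * real (card C) - 2" by linarith
          then show False using small by (simp add: algebra_simps)
        qed
      qed
    qed
    show ?thesis using comp C12 odd1 odd2 clq by blast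
  next
    case s1: False
    have s1': "real s \<ge> 1" using s1 by simp
    have cs2: "real c \<ge> real s + 2" using ks kc by simp
    have cns: "real n - real s \<ge> real c" using cn sn by simp
    have H: "2 * (real n - real s) \<ge> real c * (real n - g * real n - 2 * real s + 2)"
      using psum2 unfolding L_def .
    have tb: "real n - 2 * real s \<le> g * real n + 4"
      by (rule arith1[OF g n37 s1' cs2 cns]) (use H in simp)
    define T where "T = V - S"
    have n2s: "n \<ge> 2 * s + 2" using ks kc cn by simp
    have cardT: "card T = n - s" using SV finS cV unfolding T_def s_def by (simp add: card_Diff_subset)
    have Tbig: "real (card T) \<ge> real n / 2" using cardT n2s by simp
    define A where "A C = {B. B \<subseteq> C \<and> card B = 2}" for C :: "'a set"
    have ET: "{e \<in> E. e \<subseteq> T} \<subseteq> (\<Union>C\<in>P. A C)"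
    proof
      fix e assume e: "e \<in> {e \<in> E. e \<subseteq> T}"
      then obtain x y where xy: "e = {x, y}" "x \<noteq> y" using sg unfolding simple_graph_def by blast
      have "x \<in> \<Union>P" "y \<in> \<Union>P" using e xy unP unfolding T_def by blast+
      then obtain C D where C: "C \<in> P" "x \<in> C" and D: "D \<in> P" "y \<in> D" by blast
      have "C = D"
      proof (rule ccontr)
        assume "C \<noteq> D"
        then have "{x, y} \<notin> E" using crP C D by blast
        then show False using e xy by blast
      qed
      then have "e \<in> A C" using C D xy unfolding A_def by auto
      then show "e \<in> (\<Union>C\<in>P. A C)" using C by blast
    qed
    have finET: "finite (\<Union>C\<in>P. A C)" using finP finC unfolding A_def by auto
    have "card {e \<in> E. e \<subseteq> T} \<le> card (\<Union>C\<in>P. A C)" by (rule card_mono[OF finET ET])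
    also have "\<dots> \<le> (\<Sum>C\<in>P. card (A C))" by (rule card_UN_le[OF finP])
    also have "\<dots> \<le> (\<Sum>C\<in>P. card C * (n - 2 * s - 2))"
    proof (rule sum_mono)
      fix C assume C: "C \<in> P"
      have "card (A C) = card C choose 2" unfolding A_def by (rule n_subsets[OF finC[OF C]])
      also have "\<dots> = card C * (card C - 1) div 2" by (rule choose_two)
      also have "\<dots> \<le> card C * (card C - 1)" by simp
      also have "\<dots> \<le> card C * (n - 2 * s - 2)"
      proof -
        have "\<forall>D\<in>P - {C}. 1 \<le> card D" using neP finC by (simp add: Suc_leI card_gt_0_iff)
        then have "of_nat (card (P - {C})) * 1 \<le> (\<Sum>D\<in>P - {C}. card D)"
          using sum_bounded_below[of "P - {C}" 1 card] by blast
        moreover have "card (P - {C}) = c - 1" using C finP unfolding c_def by simp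
        moreover have "(\<Sum>D\<in>P. card D) = card C + (\<Sum>D\<in>P - {C}. card D)"
          using C finP by (simp add: sum.remove)
        ultimately have "card C + (c - 1) \<le> n - s" using sumP by simp
        then have "card C - 1 \<le> n - 2 * s - 2" using ks kc c2 by simp
        then show ?thesis by (rule mult_left_mono) simp
      qed
      finally show "card (A C) \<le> card C * (n - 2 * s - 2)" .
    qed
    also have "\<dots> = (\<Sum>C\<in>P. card C) * (n - 2 * s - 2)" by (rule sum_distrib_right[symmetric])
    also have "\<dots> = (n - s) * (n - 2 * s - 2)" unfolding sumP ..
    also have "\<dots> \<le> n * (n - 2 * s - 2)" by simp
    finally have ecount: "card {e \<in> E. e \<subseteq> T} \<le> n * (n - 2 * s - 2)" .
    have "real (n * (n - 2 * s - 2)) = real n * (real n - 2 * real s - 2)" using n2s by simp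
    also have "\<dots> \<le> real n * (g * real n + 2)" using tb by (intro mult_left_mono) auto
    also have "\<dots> \<le> 2 * g * (real n)\<^sup>2"
    proof -
      have "2 \<le> g * real n" using ng g by (simp add: field_simps)
      then have "real n * 2 \<le> real n * (g * real n)" by (intro mult_left_mono) auto
      then show ?thesis by (simp add: power2_eq_square algebra_simps)
    qed
    finally have "real (card {e \<in> E. e \<subseteq> T}) \<le> 2 * g * (real (card V))\<^sup>2"
      using ecount cV by (smt (verit) of_nat_le_iff)
    then have "gamma_independent V E (2 * g) T" unfolding gamma_independent_def T_def by blast
    then show ?thesis using Tbig by blast
  qed
qed


theorem proposition2p9:
  "\<exists>\<gamma>0::real. \<gamma>0 > 0 \<and>
     (\<forall>\<gamma>. 0 < \<gamma> \<and> \<gamma> \<le> \<gamma>0 \<longrightarrow>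
       (\<exists>n0::nat. \<forall>n::nat. even n \<and> n \<ge> n0 \<longrightarrow>
         (\<forall>(V::nat set) (E::nat set set).
            simple_graph V E \<and> card V = n \<and> sigma V E \<ge> ereal (real n - \<gamma> * real n) \<longrightarrow>
              has_perfect_matching V E
            \<or> (\<exists>S. gamma_independent V E (2 * \<gamma>) S \<and> real (card S) \<ge> real n / 2)
            \<or> (\<exists>C1 C2. components V E = {C1, C2} \<and> C1 \<noteq> C2 \<and> odd (card C1) \<and> odd (card C2) \<and>
                 (\<forall>C \<in> {C1, C2}. real (card C) \<le> (1 - \<gamma>) / 2 * real n \<longrightarrow> clique E C)))))"
proof (rule exI[of _ "1/6"], intro conjI allI impI)
  show "(0::real) < 1/6" by simp
  fix \<gamma> :: real assume g: "0 < \<gamma> \<and> \<gamma> \<le> 1/6"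
  show "\<exists>n0::nat. \<forall>n::nat. even n \<and> n \<ge> n0 \<longrightarrow>
         (\<forall>(V::nat set) (E::nat set set).
            simple_graph V E \<and> card V = n \<and> sigma V E \<ge> ereal (real n - \<gamma> * real n) \<longrightarrow>
              has_perfect_matching V E
            \<or> (\<exists>S. gamma_independent V E (2 * \<gamma>) S \<and> real (card S) \<ge> real n / 2)
            \<or> (\<exists>C1 C2. components V E = {C1, C2} \<and> C1 \<noteq> C2 \<and> odd (card C1) \<and> odd (card C2) \<and>
                 (\<forall>C \<in> {C1, C2}. real (card C) \<le> (1 - \<gamma>) / 2 * real n \<longrightarrow> clique E C)))"
  proof (rule exI[of _ "nat \<lceil>2 / \<gamma>\<rceil> + 37"], intro allI impI)
    fix n :: nat and V :: "nat set" and E :: "nat set set"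
    assume n: "even n \<and> nat \<lceil>2 / \<gamma>\<rceil> + 37 \<le> n"
      and H: "simple_graph V E \<and> card V = n \<and> ereal (real n - \<gamma> * real n) \<le> sigma V E"
    have n37: "real n \<ge> 37" using n by linarith
    have "real (nat \<lceil>2 / \<gamma>\<rceil>) \<le> real n" using n by linarith
    moreover have "2 / \<gamma> \<le> real (nat \<lceil>2 / \<gamma>\<rceil>)" by linarith
    ultimately have ng: "real n \<ge> 2 / \<gamma>" by linarith
    show "has_perfect_matching V E
            \<or> (\<exists>S. gamma_independent V E (2 * \<gamma>) S \<and> real (card S) \<ge> real n / 2)
            \<or> (\<exists>C1 C2. components V E = {C1, C2} \<and> C1 \<noteq> C2 \<and> odd (card C1) \<and> odd (card C2) \<and>
                 (\<forall>C \<in> {C1, C2}. real (card C) \<le> (1 - \<gamma>) / 2 * real n \<longrightarrow> clique E C))"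
    proof (cases "has_perfect_matching V E")
      case True then show ?thesis by blast
    next
      case False
      have "(\<exists>S. gamma_independent V E (2 * \<gamma>) S \<and> real (card S) \<ge> real n / 2)
            \<or> (\<exists>C1 C2. components V E = {C1, C2} \<and> C1 \<noteq> C2 \<and> odd (card C1) \<and> odd (card C2) \<and>
                 (\<forall>C \<in> {C1, C2}. real (card C) \<le> (1 - \<gamma>) / 2 * real n \<longrightarrow> clique E C))"
        using main_lemma[of \<gamma> n V E] g n n37 ng H False by blast
      then show ?thesis by blast
    qed
  qed
qed


end
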